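(* $KU^+_1(\mathcal{O}(S^2_q))$ is non-trivial.
   Context: $q$ is the deformation parameter (a real number). The standard Podleś sphere $\mathcal{O}(S^2_q)$ is the algebra generated by $z_{-1},z_0,z_1$ subject to $z_0^2-qz_1z_{-1}-q^{-1}z_{-1}z_1=1$, $(1-q^2)z_0^2+qz_{-1}z_1-qz_1z_{-1}=0$, $z_{-1}z_0=q^2z_0z_{-1}$, $z_0z_1=q^2z_1z_0$, with $*$-structure $z_i^*=(-q)^iz_{-i}$ ($i=-1,0,1$). For a $*$-algebra $\mathcal{A}$ and $\epsilon=\pm1$, $U^\epsilon_n(\mathcal{A})$ is the group of $2n\times2n$ matrices $M=\begin{pmatrix}A&B\\C&D\end{pmatrix}$ over $\mathcal{A}$ with $M^\star M=MM^\star=I_{2n}$, where $M^\star=\begin{pmatrix}D^\dagger&\epsilon B^\dagger\\ \epsilon C^\dagger&A^\dagger\end{pmatrix}$ and $\dagger$ is the transpose composed with entrywise $*$; $U^\epsilon(\mathcal{A})=\mathrm{colim}_nU^\epsilon_n(\mathcal{A})$. The Hermitian $K$-group $KU^\epsilon_1(\mathcal{A})=\pi_1(BU^\epsilon(\mathcal{A})^+)$ (Quillen plus construction) is the abelianization $U^\epsilon(\mathcal{A})/[U^\epsilon(\mathcal{A}),U^\epsilon(\mathcal{A})]$. Here $KU^+_1$ denotes $KU^\epsilon_1$ with $\epsilon=+1$. *)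

theory Defs
  imports Complex_Main "HOL-Algebra.Algebra"
begin

datatype gen = Zm | Z0 | Zp

(* elements of the free complex algebra: finitely supported coefficient functions on words *)
type_synonym fa = "gen list \<Rightarrow> complex"

definition fa_fin :: "fa \<Rightarrow> bool" where
  "fa_fin f \<longleftrightarrow> finite {w. f w \<noteq> 0}"

definition fa_zero :: fa where "fa_zero = (\<lambda>w. 0)"
definition fa_word :: "gen list \<Rightarrow> fa" where "fa_word v = (\<lambda>w. if w = v then 1 else 0)"
definition fa_one :: fa where "fa_one = fa_word []"
definition fa_add :: "fa \<Rightarrow> fa \<Rightarrow> fa" where "fa_add f g = (\<lambda>w. f w + g w)"
definition fa_smult :: "complex \<Rightarrow> fa \<Rightarrow> fa" where "fa_smult c f = (\<lambda>w. c * f w)"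
definition fa_diff :: "fa \<Rightarrow> fa \<Rightarrow> fa" where "fa_diff f g = (\<lambda>w. f w - g w)"

definition fa_mult :: "fa \<Rightarrow> fa \<Rightarrow> fa" where
  "fa_mult f g = (\<lambda>w. \<Sum>i\<le>length w. f (take i w) * g (drop i w))"

fun gen_idx :: "gen \<Rightarrow> int" where
  "gen_idx Zm = -1" | "gen_idx Z0 = 0" | "gen_idx Zp = 1"

fun gen_swap :: "gen \<Rightarrow> gen" where
  "gen_swap Zm = Zp" | "gen_swap Z0 = Z0" | "gen_swap Zp = Zm"

(* z_i^* = (-q)^i z_{-i}, extended as an antilinear anti-multiplicative involution:
   (c x_1 ... x_k)^* = conj c * x_k^* ... x_1^* *)
definition word_coef :: "real \<Rightarrow> gen list \<Rightarrow> real" where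
  "word_coef q w = (\<Prod>x\<leftarrow>w. (- q) powi gen_idx x)"

definition fa_star :: "real \<Rightarrow> fa \<Rightarrow> fa" where
  "fa_star q f = (\<lambda>v. let w = rev (map gen_swap v) in cnj (f w) * complex_of_real (word_coef q w))"

definition podles_rels :: "real \<Rightarrow> fa set" where
  "podles_rels q =
   { (\<lambda>w. fa_word [Z0,Z0] w - of_real q * fa_word [Zp,Zm] w - of_real (inverse q) * fa_word [Zm,Zp] w
          - fa_word [] w),
     (\<lambda>w. of_real (1 - q\<^sup>2) * fa_word [Z0,Z0] w + of_real q * fa_word [Zm,Zp] w
          - of_real q * fa_word [Zp,Zm] w),
     (\<lambda>w. fa_word [Zm,Z0] w - of_real (q\<^sup>2) * fa_word [Z0,Zm] w),
     (\<lambda>w. fa_word [Z0,Zp] w - of_real (q\<^sup>2) * fa_word [Zp,Z0] w) }"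

inductive_set podles_ideal :: "real \<Rightarrow> fa set" for q :: real where
  rel: "r \<in> podles_rels q \<Longrightarrow> r \<in> podles_ideal q"
| zero: "fa_zero \<in> podles_ideal q"
| add: "f \<in> podles_ideal q \<Longrightarrow> g \<in> podles_ideal q \<Longrightarrow> fa_add f g \<in> podles_ideal q"
| mult: "f \<in> podles_ideal q \<Longrightarrow> fa_fin a \<Longrightarrow> fa_fin b \<Longrightarrow>
           fa_mult (fa_mult a f) b \<in> podles_ideal q"

definition pod_eq :: "real \<Rightarrow> fa \<Rightarrow> fa \<Rightarrow> bool" where
  "pod_eq q f g \<longleftrightarrow> fa_diff f g \<in> podles_ideal q"

(* Index (b,i): b = False is the first block row/column, b = True the second; i the position.
   A 2n x 2n matrix [[A,B],[C,D]] has entries at indices with i < n.  Elements of the colimit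
   U^\<epsilon>(A) = colim_n U^\<epsilon>_n(A) (stabilisation M \<mapsto> [[A\<oplus>1, B\<oplus>0],[C\<oplus>0, D\<oplus>1]])
   are represented by infinite matrices that agree with the identity outside some finite block. *)
type_synonym idx = "bool \<times> nat"
type_synonym mat = "idx \<Rightarrow> idx \<Rightarrow> fa"

definition mat_id :: mat where
  "mat_id = (\<lambda>i j. if i = j then fa_one else fa_zero)"

definition finitary :: "mat \<Rightarrow> bool" where
  "finitary M \<longleftrightarrow> (\<forall>i j. fa_fin (M i j)) \<and>
     (\<exists>n. \<forall>i j. (snd i \<ge> n \<or> snd j \<ge> n) \<longrightarrow> M i j = mat_id i j)"

definition mat_mult :: "mat \<Rightarrow> mat \<Rightarrow> mat" where
  "mat_mult M N = (\<lambda>i j w. \<Sum>k\<in>{k. M i k \<noteq> fa_zero \<and> N k j \<noteq> fa_zero}. fa_mult (M i k) (N k j) w)"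

(* M^\<star> = [[D^\<dagger>, \<epsilon> B^\<dagger>],[\<epsilon> C^\<dagger>, A^\<dagger>]] *)
definition mat_star :: "real \<Rightarrow> complex \<Rightarrow> mat \<Rightarrow> mat" where
  "mat_star q eps M = (\<lambda>(b,i) (c,j).
     fa_smult (if b = c then 1 else eps) (fa_star q (M (\<not> c, j) (\<not> b, i))))"

definition mat_pod_eq :: "real \<Rightarrow> mat \<Rightarrow> mat \<Rightarrow> bool" where
  "mat_pod_eq q M N \<longleftrightarrow> (\<forall>i j. pod_eq q (M i j) (N i j))"

definition U_reps :: "real \<Rightarrow> complex \<Rightarrow> mat set" where
  "U_reps q eps = {M. finitary M \<and>
      mat_pod_eq q (mat_mult (mat_star q eps M) M) mat_id \<and>
      mat_pod_eq q (mat_mult M (mat_star q eps M)) mat_id}"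

definition mat_cls :: "real \<Rightarrow> mat \<Rightarrow> mat set" where
  "mat_cls q M = {N. finitary N \<and> mat_pod_eq q N M}"

definition U_group :: "real \<Rightarrow> complex \<Rightarrow> mat set monoid" where
  "U_group q eps = \<lparr> partial_object.carrier = mat_cls q ` U_reps q eps,
     monoid.mult = (\<lambda>S T. mat_cls q (mat_mult (SOME M. M \<in> S) (SOME N. N \<in> T))),
     monoid.one = mat_cls q mat_id \<rparr>"

(* KU^\<epsilon>_1 = U^\<epsilon>/[U^\<epsilon>,U^\<epsilon>]; it is non-trivial iff the commutator subgroup is proper *)
definition KU1_nontrivial :: "real \<Rightarrow> complex \<Rightarrow> bool" where
  "KU1_nontrivial q eps \<longleftrightarrow>
     derived (U_group q eps) (carrier (U_group q eps)) \<noteq> carrier (U_group q eps)"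

end

theory Submission
  imports Defs "Jordan_Normal_Form.Determinant"
begin


lemma fa_mult_assoc: "fa_mult (fa_mult f g) h = fa_mult f (fa_mult g h)"
proof
  fix w :: "gen list"
  let ?n = "length w"
  define G where "G = (\<lambda>j k. f (take j w) * g (take k (drop j w)) * h (drop (j+k) w))"
  have L: "fa_mult (fa_mult f g) h w = (\<Sum>i\<le>?n. \<Sum>j\<le>i. G j (i - j))"
    unfolding fa_mult_def G_def
    apply (rule sum.cong[OF refl])
    by (simp add: sum_distrib_right min_absorb1 take_drop)
  have R: "fa_mult f (fa_mult g h) w = (\<Sum>j\<le>?n. \<Sum>k\<le>?n - j. G j k)"
    unfolding fa_mult_def G_def
    apply (rule sum.cong[OF refl])
    by (simp add: sum_distrib_left mult.assoc add.commute)
  have S: "{(j,k). j + k \<le> ?n} = Sigma {..?n} (\<lambda>j. {..?n - j})" by auto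
  have "(\<Sum>(j,k)\<in>{(j,k). j + k \<le> ?n}. G j k) = (\<Sum>j\<le>?n. \<Sum>k\<le>?n - j. G j k)"
    unfolding S by (simp add: sum.Sigma)
  moreover have "(\<Sum>(j,k)\<in>{(j,k). j + k \<le> ?n}. G j k) = (\<Sum>i\<le>?n. \<Sum>j\<le>i. G j (i - j))"
    by (rule sum.triangle_reindex_eq)
  ultimately show "fa_mult (fa_mult f g) h w = fa_mult f (fa_mult g h) w" using L R by simp
qed

definition fs :: "'k set \<Rightarrow> ('k \<Rightarrow> fa) \<Rightarrow> fa" where
  "fs K F = (\<lambda>w. \<Sum>k\<in>K. F k w)"

lemma fa_mult_one_left[simp]: "fa_mult fa_one f = f"
proof
  fix w
  have "fa_mult fa_one f w = (\<Sum>i\<in>{..length w}. if i = 0 then f w else 0)"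
    unfolding fa_mult_def fa_one_def fa_word_def
    by (rule sum.cong) auto
  then show "fa_mult fa_one f w = f w" by simp
qed

lemma fa_mult_one_right[simp]: "fa_mult f fa_one = f"
proof
  fix w
  have "fa_mult f fa_one w = (\<Sum>i\<in>{..length w}. if i = length w then f w else 0)"
    unfolding fa_mult_def fa_one_def fa_word_def
    by (rule sum.cong) auto
  then show "fa_mult f fa_one w = f w" by simp
qed

lemma fa_mult_zero_left[simp]: "fa_mult fa_zero f = fa_zero"
  by (simp add: fa_mult_def fa_zero_def)
lemma fa_mult_zero_right[simp]: "fa_mult f fa_zero = fa_zero"
  by (simp add: fa_mult_def fa_zero_def)

lemma fa_mult_add_left: "fa_mult (fa_add f g) h = fa_add (fa_mult f h) (fa_mult g h)"
  by (simp add: fa_mult_def fa_add_def distrib_right sum.distrib)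
lemma fa_mult_add_right: "fa_mult h (fa_add f g) = fa_add (fa_mult h f) (fa_mult h g)"
  by (simp add: fa_mult_def fa_add_def distrib_left sum.distrib)
lemma fa_mult_diff_left: "fa_mult (fa_diff f g) h = fa_diff (fa_mult f h) (fa_mult g h)"
  by (simp add: fa_mult_def fa_diff_def left_diff_distrib sum_subtractf)
lemma fa_mult_diff_right: "fa_mult h (fa_diff f g) = fa_diff (fa_mult h f) (fa_mult h g)"
  by (simp add: fa_mult_def fa_diff_def right_diff_distrib sum_subtractf)
lemma fa_mult_smult_left: "fa_mult (fa_smult c f) h = fa_smult c (fa_mult f h)"
  by (simp add: fa_mult_def fa_smult_def sum_distrib_left mult.assoc)
lemma fa_mult_smult_right: "fa_mult h (fa_smult c f) = fa_smult c (fa_mult h f)"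
  by (simp add: fa_mult_def fa_smult_def sum_distrib_left mult.left_commute)
lemma fa_mult_fs_left: "finite K \<Longrightarrow> fa_mult (fs K F) h = fs K (\<lambda>k. fa_mult (F k) h)"
  unfolding fa_mult_def fs_def
  apply (rule ext) apply (simp add: sum_distrib_right) by (rule sum.swap)
lemma fa_mult_fs_right: "finite K \<Longrightarrow> fa_mult h (fs K F) = fs K (\<lambda>k. fa_mult h (F k))"
  unfolding fa_mult_def fs_def
  apply (rule ext) apply (simp add: sum_distrib_left) by (rule sum.swap)

lemma fa_word_mult: "fa_mult (fa_word u) (fa_word v) = fa_word (u @ v)"
proof
  fix w
  have "fa_mult (fa_word u) (fa_word v) w =
     (\<Sum>i\<in>{..length w}. if i = length u then (if w = u @ v then 1 else 0) else 0)"
    unfolding fa_mult_def fa_word_def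
  proof (rule sum.cong[OF refl])
    fix i assume i: "i \<in> {..length w}"
    show "(if take i w = u then 1 else 0) * (if drop i w = v then 1 else 0) =
          (if i = length u then if w = u @ v then 1 else 0 else (0::complex))"
    proof (cases "take i w = u \<and> drop i w = v")
      case True
      then have "i = length u" using i by auto
      moreover have "w = u @ v" using True by (metis append_take_drop_id)
      ultimately show ?thesis using True by simp
    next
      case False
      then have "\<not> (i = length u \<and> w = u @ v)" by auto
      then show ?thesis using False by auto
    qed
  qed
  also have "\<dots> = fa_word (u @ v) w"
    by (auto simp: fa_word_def)
  finally show "fa_mult (fa_word u) (fa_word v) w = fa_word (u @ v) w" .
qed

lemma fin_zero[simp]: "fa_fin fa_zero" by (simp add: fa_fin_def fa_zero_def)
lemma fin_word[simp]: "fa_fin (fa_word u)" by (simp add: fa_fin_def fa_word_def)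
lemma fin_one[simp]: "fa_fin fa_one" by (simp add: fa_one_def)
lemma fin_add[simp]: "fa_fin f \<Longrightarrow> fa_fin g \<Longrightarrow> fa_fin (fa_add f g)"
  unfolding fa_fin_def fa_add_def
  by (rule finite_subset[of _ "{w. f w \<noteq> 0} \<union> {w. g w \<noteq> 0}"]) (force, simp)
lemma fin_diff[simp]: "fa_fin f \<Longrightarrow> fa_fin g \<Longrightarrow> fa_fin (fa_diff f g)"
  unfolding fa_fin_def fa_diff_def
  by (rule finite_subset[of _ "{w. f w \<noteq> 0} \<union> {w. g w \<noteq> 0}"]) (force, simp)
lemma fin_smult[simp]: "fa_fin f \<Longrightarrow> fa_fin (fa_smult c f)"
  unfolding fa_fin_def fa_smult_def
  by (rule finite_subset[of _ "{w. f w \<noteq> 0}"]) auto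
lemma fin_fs[simp]: "finite K \<Longrightarrow> (\<And>k. k \<in> K \<Longrightarrow> fa_fin (F k)) \<Longrightarrow> fa_fin (fs K F)"
  unfolding fa_fin_def fs_def
  apply (rule finite_subset[of _ "\<Union>k\<in>K. {w. F k w \<noteq> 0}"])
   apply auto
  by (meson sum.neutral)

lemma fa_decomp: "fa_fin f \<Longrightarrow> f = fs {w. f w \<noteq> 0} (\<lambda>u. fa_smult (f u) (fa_word u))"
  unfolding fs_def fa_smult_def fa_word_def fa_fin_def
  by (auto intro!: ext simp: if_distrib cong: if_cong)


lemma fin_mult[simp]: "fa_fin f \<Longrightarrow> fa_fin g \<Longrightarrow> fa_fin (fa_mult f g)"
proof -
  assume f: "fa_fin f" and g: "fa_fin g"
  have "fa_mult f g = fs {w. f w \<noteq> 0} (\<lambda>u. fa_smult (f u) (fa_mult (fa_word u) g))"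
    apply (subst fa_decomp[OF f])
    using f by (simp add: fa_mult_fs_left fa_fin_def fa_mult_smult_left)
  also have "\<dots> = fs {w. f w \<noteq> 0} (\<lambda>u. fa_smult (f u) (fs {w. g w \<noteq> 0}
       (\<lambda>v. fa_smult (g v) (fa_word (u @ v)))))"
    apply (subst fa_decomp[OF g])
    using g by (simp add: fa_mult_fs_right fa_fin_def fa_mult_smult_right fa_word_mult)
  finally have eq: "fa_mult f g = fs {w. f w \<noteq> 0} (\<lambda>u. fa_smult (f u) (fs {w. g w \<noteq> 0}
       (\<lambda>v. fa_smult (g v) (fa_word (u @ v)))))" .
  have ff: "finite {w. f w \<noteq> 0}" "finite {w. g w \<noteq> 0}" using f g by (auto simp: fa_fin_def)
  show ?thesis unfolding eq using ff by (intro fin_fs fin_smult fin_word) auto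
qed



lemma fa_mult_decomp: "fa_fin f \<Longrightarrow> fa_fin g \<Longrightarrow> fa_mult f g = fs {w. f w \<noteq> 0} (\<lambda>u. fa_smult (f u) (fs {w. g w \<noteq> 0}
       (\<lambda>v. fa_smult (g v) (fa_word (u @ v)))))"
proof -
  assume f: "fa_fin f" and g: "fa_fin g"
  have "fa_mult f g = fs {w. f w \<noteq> 0} (\<lambda>u. fa_smult (f u) (fa_mult (fa_word u) g))"
    apply (subst fa_decomp[OF f])
    using f by (simp add: fa_mult_fs_left fa_fin_def fa_mult_smult_left)
  also have "\<dots> = fs {w. f w \<noteq> 0} (\<lambda>u. fa_smult (f u) (fs {w. g w \<noteq> 0}
       (\<lambda>v. fa_smult (g v) (fa_word (u @ v)))))"
    apply (subst fa_decomp[OF g])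
    using g by (simp add: fa_mult_fs_right fa_fin_def fa_mult_smult_right fa_word_mult)
  finally show ?thesis .
qed

lemma rels_fin: "r \<in> podles_rels q \<Longrightarrow> fa_fin r"
  unfolding podles_rels_def fa_fin_def
  apply (elim insertE emptyE)
  subgoal by (rule finite_subset[of _ "{[Z0,Z0],[Zp,Zm],[Zm,Zp],[]}"]) (auto simp: fa_word_def)
  subgoal by (rule finite_subset[of _ "{[Z0,Z0],[Zp,Zm],[Zm,Zp]}"]) (auto simp: fa_word_def)
  subgoal by (rule finite_subset[of _ "{[Zm,Z0],[Z0,Zm]}"]) (auto simp: fa_word_def)
  subgoal by (rule finite_subset[of _ "{[Z0,Zp],[Zp,Z0]}"]) (auto simp: fa_word_def)
  done

lemma ideal_fin: "f \<in> podles_ideal q \<Longrightarrow> fa_fin f"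
  by (induction rule: podles_ideal.induct) (auto simp: rels_fin)

lemma ideal_mult_left: "f \<in> podles_ideal q \<Longrightarrow> fa_fin a \<Longrightarrow> fa_mult a f \<in> podles_ideal q"
  using podles_ideal.mult[of f q a fa_one] by simp
lemma ideal_mult_right: "f \<in> podles_ideal q \<Longrightarrow> fa_fin b \<Longrightarrow> fa_mult f b \<in> podles_ideal q"
  using podles_ideal.mult[of f q fa_one b] by simp
lemma ideal_smult: "f \<in> podles_ideal q \<Longrightarrow> fa_smult c f \<in> podles_ideal q"
  using ideal_mult_left[of f q "fa_smult c fa_one"] by (simp add: fa_mult_smult_left)
lemma ideal_diff: "f \<in> podles_ideal q \<Longrightarrow> g \<in> podles_ideal q \<Longrightarrow> fa_diff f g \<in> podles_ideal q"
proof -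
  assume "f \<in> podles_ideal q" "g \<in> podles_ideal q"
  then have "fa_add f (fa_smult (-1) g) \<in> podles_ideal q" by (intro podles_ideal.add ideal_smult)
  moreover have "fa_add f (fa_smult (-1) g) = fa_diff f g" by (auto simp: fa_add_def fa_smult_def fa_diff_def)
  ultimately show ?thesis by simp
qed

lemma ideal_fs: "finite K \<Longrightarrow> (\<And>k. k \<in> K \<Longrightarrow> F k \<in> podles_ideal q) \<Longrightarrow> fs K F \<in> podles_ideal q"
proof (induction K rule: finite_induct)
  case empty
  have "fs {} F = fa_zero" by (simp add: fs_def fa_zero_def)
  then show ?case using podles_ideal.zero by simp
next
  case (insert k K)
  have "fs (insert k K) F = fa_add (F k) (fs K F)"
    using insert.hyps by (auto simp: fs_def fa_add_def)
  then show ?case using insert by (simp add: podles_ideal.add)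
qed

lemma pod_refl[simp]: "pod_eq q f f"
proof -
  have "fa_diff f f = fa_zero" by (simp add: fa_diff_def fa_zero_def)
  then show ?thesis by (simp add: pod_eq_def podles_ideal.zero)
qed

lemma pod_sym: "pod_eq q f g \<Longrightarrow> pod_eq q g f"
proof -
  assume "pod_eq q f g"
  then have "fa_smult (-1) (fa_diff f g) \<in> podles_ideal q" unfolding pod_eq_def by (rule ideal_smult)
  moreover have "fa_smult (-1) (fa_diff f g) = fa_diff g f" by (auto simp: fa_smult_def fa_diff_def)
  ultimately show ?thesis by (simp add: pod_eq_def)
qed

lemma pod_trans: "pod_eq q f g \<Longrightarrow> pod_eq q g h \<Longrightarrow> pod_eq q f h"
proof -
  assume "pod_eq q f g" "pod_eq q g h"
  then have "fa_add (fa_diff f g) (fa_diff g h) \<in> podles_ideal q" unfolding pod_eq_def by (rule podles_ideal.add)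
  moreover have "fa_add (fa_diff f g) (fa_diff g h) = fa_diff f h" by (auto simp: fa_add_def fa_diff_def)
  ultimately show ?thesis by (simp add: pod_eq_def)
qed

lemma pod_mult: "fa_fin f' \<Longrightarrow> fa_fin g \<Longrightarrow> pod_eq q f f' \<Longrightarrow> pod_eq q g g' \<Longrightarrow>
   pod_eq q (fa_mult f g) (fa_mult f' g')"
proof -
  assume a: "fa_fin f'" "fa_fin g" "pod_eq q f f'" "pod_eq q g g'"
  have "fa_add (fa_mult (fa_diff f f') g) (fa_mult f' (fa_diff g g')) \<in> podles_ideal q"
    using a unfolding pod_eq_def by (intro podles_ideal.add ideal_mult_left ideal_mult_right)
  moreover have "fa_add (fa_mult (fa_diff f f') g) (fa_mult f' (fa_diff g g')) = fa_diff (fa_mult f g) (fa_mult f' g')"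
    unfolding fa_mult_diff_left fa_mult_diff_right by (auto simp: fa_add_def fa_diff_def)
  ultimately show ?thesis by (simp add: pod_eq_def)
qed

lemma pod_fs: "finite K \<Longrightarrow> (\<And>k. k \<in> K \<Longrightarrow> pod_eq q (F k) (G k)) \<Longrightarrow> pod_eq q (fs K F) (fs K G)"
proof -
  assume a: "finite K" "\<And>k. k \<in> K \<Longrightarrow> pod_eq q (F k) (G k)"
  have "fs K (\<lambda>k. fa_diff (F k) (G k)) \<in> podles_ideal q"
    using a unfolding pod_eq_def by (intro ideal_fs) auto
  moreover have "fs K (\<lambda>k. fa_diff (F k) (G k)) = fa_diff (fs K F) (fs K G)"
    by (auto simp: fs_def fa_diff_def sum_subtractf)
  ultimately show ?thesis by (simp add: pod_eq_def)
qed

fun evg :: "real \<Rightarrow> gen \<Rightarrow> complex" where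
  "evg q Zp = 1" | "evg q Z0 = 0" | "evg q Zm = of_real (- q / (1 + q\<^sup>2))"

definition ev :: "real \<Rightarrow> gen list \<Rightarrow> complex" where
  "ev q w = prod_list (map (evg q) w)"

lemma ev_append: "ev q (u @ v) = ev q u * ev q v"
  by (simp add: ev_def)

definition chi :: "real \<Rightarrow> fa \<Rightarrow> complex" where
  "chi q f = (\<Sum>w\<in>{w. f w \<noteq> 0}. f w * ev q w)"

lemma chi_eq: "finite A \<Longrightarrow> {w. f w \<noteq> 0} \<subseteq> A \<Longrightarrow> chi q f = (\<Sum>w\<in>A. f w * ev q w)"
  unfolding chi_def by (rule sum.mono_neutral_left) auto

lemma chi_add: "fa_fin f \<Longrightarrow> fa_fin g \<Longrightarrow> chi q (fa_add f g) = chi q f + chi q g"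
proof -
  assume f: "fa_fin f" and g: "fa_fin g"
  let ?A = "{w. f w \<noteq> 0} \<union> {w. g w \<noteq> 0}"
  have fin: "finite ?A" using f g by (simp add: fa_fin_def)
  have "chi q (fa_add f g) = (\<Sum>w\<in>?A. fa_add f g w * ev q w)"
    by (rule chi_eq[OF fin]) (auto simp: fa_add_def)
  also have "\<dots> = (\<Sum>w\<in>?A. f w * ev q w) + (\<Sum>w\<in>?A. g w * ev q w)"
    by (simp add: fa_add_def distrib_right sum.distrib)
  also have "\<dots> = chi q f + chi q g"
    using chi_eq[OF fin, of f q] chi_eq[OF fin, of g q] by auto
  finally show ?thesis .
qed

lemma chi_diff: "fa_fin f \<Longrightarrow> fa_fin g \<Longrightarrow> chi q (fa_diff f g) = chi q f - chi q g"
proof -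
  assume f: "fa_fin f" and g: "fa_fin g"
  let ?A = "{w. f w \<noteq> 0} \<union> {w. g w \<noteq> 0}"
  have fin: "finite ?A" using f g by (simp add: fa_fin_def)
  have "chi q (fa_diff f g) = (\<Sum>w\<in>?A. fa_diff f g w * ev q w)"
    by (rule chi_eq[OF fin]) (auto simp: fa_diff_def)
  also have "\<dots> = (\<Sum>w\<in>?A. f w * ev q w) - (\<Sum>w\<in>?A. g w * ev q w)"
    by (simp add: fa_diff_def left_diff_distrib sum_subtractf)
  also have "\<dots> = chi q f - chi q g"
    using chi_eq[OF fin, of f q] chi_eq[OF fin, of g q] by auto
  finally show ?thesis .
qed

lemma chi_smult: "fa_fin f \<Longrightarrow> chi q (fa_smult c f) = c * chi q f"
proof -
  assume f: "fa_fin f"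
  let ?A = "{w. f w \<noteq> 0}"
  have fin: "finite ?A" using f by (simp add: fa_fin_def)
  have "chi q (fa_smult c f) = (\<Sum>w\<in>?A. fa_smult c f w * ev q w)"
    by (rule chi_eq[OF fin]) (auto simp: fa_smult_def)
  also have "\<dots> = c * chi q f"
    by (simp add: fa_smult_def sum_distrib_left mult.assoc chi_def)
  finally show ?thesis .
qed

lemma chi_zero[simp]: "chi q fa_zero = 0" by (simp add: chi_def fa_zero_def)

lemma chi_fs: "finite K \<Longrightarrow> (\<And>k. k \<in> K \<Longrightarrow> fa_fin (F k)) \<Longrightarrow> chi q (fs K F) = (\<Sum>k\<in>K. chi q (F k))"
proof (induction K rule: finite_induct)
  case empty
  have "fs {} F = fa_zero" by (simp add: fs_def fa_zero_def)
  then show ?case by simp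
next
  case (insert k K)
  have "fs (insert k K) F = fa_add (F k) (fs K F)"
    using insert.hyps by (auto simp: fs_def fa_add_def)
  then show ?case using insert by (simp add: chi_add)
qed

lemma chi_word[simp]: "chi q (fa_word u) = ev q u"
proof -
  have "chi q (fa_word u) = (\<Sum>w\<in>{u}. fa_word u w * ev q w)"
    by (rule chi_eq) (auto simp: fa_word_def)
  then show ?thesis by (simp add: fa_word_def)
qed

lemma chi_one[simp]: "chi q fa_one = 1" by (simp add: fa_one_def ev_def)

lemma chi_mult: "fa_fin f \<Longrightarrow> fa_fin g \<Longrightarrow> chi q (fa_mult f g) = chi q f * chi q g"
proof -
  assume f: "fa_fin f" and g: "fa_fin g"
  have ff: "finite {w. f w \<noteq> 0}" "finite {w. g w \<noteq> 0}" using f g by (auto simp: fa_fin_def)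
  have "chi q (fa_mult f g) = (\<Sum>u\<in>{w. f w \<noteq> 0}. f u * (\<Sum>v\<in>{w. g w \<noteq> 0}. g v * ev q (u @ v)))"
    unfolding fa_mult_decomp[OF f g] using ff
    by (simp add: chi_fs chi_smult)
  also have "\<dots> = (\<Sum>u\<in>{w. f w \<noteq> 0}. f u * ev q u) * (\<Sum>v\<in>{w. g w \<noteq> 0}. g v * ev q v)"
    unfolding sum_product by (simp add: ev_append sum_distrib_left mult_ac)
  finally show ?thesis by (simp add: chi_def)
qed

lemma chi_rels: "0 < q \<Longrightarrow> r \<in> podles_rels q \<Longrightarrow> chi q r = 0"
proof -
  assume q: "0 < q" and r: "r \<in> podles_rels q"
  have ab: "evg q Zp * evg q Zm = of_real (- q / (1 + q\<^sup>2))" "evg q Zm * evg q Zp = of_real (- q / (1 + q\<^sup>2))" by simp_all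
  have key: "- (q * (- q / (1 + q\<^sup>2))) - inverse q * (- q / (1 + q\<^sup>2)) - 1 = 0"
  proof -
    have nz: "1 + q\<^sup>2 \<noteq> 0" by (smt (verit) zero_le_power2)
    show ?thesis using q nz by (simp add: field_simps power2_eq_square)
  qed
  have key2: "of_real (- (q * (- q / (1 + q\<^sup>2))) - inverse q * (- q / (1 + q\<^sup>2)) - 1) = (0::complex)"
    using key by simp
  from r show ?thesis
    unfolding podles_rels_def
    apply (elim insertE emptyE)
    subgoal
      apply (subst chi_eq[of "{[Z0,Z0],[Zp,Zm],[Zm,Zp],[]}"])
        apply (auto simp: fa_word_def)[2]
      using key2 by (simp add: fa_word_def ev_def add_diff_eq)
    subgoal
      apply (subst chi_eq[of "{[Z0,Z0],[Zp,Zm],[Zm,Zp]}"])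
        apply (auto simp: fa_word_def)[2]
      by (simp add: fa_word_def ev_def)
    subgoal
      apply (subst chi_eq[of "{[Zm,Z0],[Z0,Zm]}"])
        apply (auto simp: fa_word_def)[2]
      by (simp add: fa_word_def ev_def)
    subgoal
      apply (subst chi_eq[of "{[Z0,Zp],[Zp,Z0]}"])
        apply (auto simp: fa_word_def)[2]
      by (simp add: fa_word_def ev_def)
    done
qed

lemma chi_ideal: assumes q: "0 < q" and f: "f \<in> podles_ideal q" shows "chi q f = 0"
  using f
proof (induction rule: podles_ideal.induct)
  case (rel r) then show ?case using q by (rule chi_rels[rotated])
next
  case zero then show ?case by simp
next
  case (add f g) then show ?case by (simp add: chi_add ideal_fin)
next
  case (mult f a b) then show ?case by (simp add: chi_mult ideal_fin)
qed

lemma chi_pod: "0 < q \<Longrightarrow> fa_fin f \<Longrightarrow> fa_fin g \<Longrightarrow> pod_eq q f g \<Longrightarrow> chi q f = chi q g"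
  unfolding pod_eq_def using chi_ideal chi_diff by fastforce



definition bnd :: "Defs.mat \<Rightarrow> nat \<Rightarrow> bool" where
  "bnd M n \<longleftrightarrow> (\<forall>i j. (snd i \<ge> n \<or> snd j \<ge> n) \<longrightarrow> M i j = mat_id i j)"

lemma bnd_mono: "bnd M n \<Longrightarrow> n \<le> m \<Longrightarrow> bnd M m"
  unfolding bnd_def by auto

lemma finitary_iff: "finitary M \<longleftrightarrow> (\<forall>i j. fa_fin (M i j)) \<and> (\<exists>n. bnd M n)"
  unfolding finitary_def bnd_def by auto

lemma finitary_common: "finitary M \<Longrightarrow> finitary N \<Longrightarrow> \<exists>n. bnd M n \<and> bnd N n"
  unfolding finitary_iff by (metis bnd_mono max.cobounded1 max.cobounded2)

definition Blk :: "nat \<Rightarrow> idx set" where "Blk m = {k. snd k < m}"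

lemma finite_Blk[simp]: "finite (Blk m)"
proof -
  have "Blk m = UNIV \<times> {..<m}" by (auto simp: Blk_def)
  then show ?thesis by simp
qed

lemma fa_one_ne_zero[simp]: "fa_one \<noteq> fa_zero"
proof
  assume "fa_one = fa_zero"
  then have "fa_one [] = fa_zero []" by simp
  then show False by (simp add: fa_one_def fa_word_def fa_zero_def)
qed

lemma mat_id_ne[simp]: "mat_id i k \<noteq> fa_zero \<longleftrightarrow> k = i"
  by (auto simp: mat_id_def)

lemma fin_mat_id[simp]: "fa_fin (mat_id i j)" by (simp add: mat_id_def)

lemma mat_mult_blk:
  assumes "bnd M n" "n \<le> m" "snd i < m"
  shows "mat_mult M N i j = fs (Blk m) (\<lambda>k. fa_mult (M i k) (N k j))"
proof -
  have sub: "{k. M i k \<noteq> fa_zero \<and> N k j \<noteq> fa_zero} \<subseteq> Blk m"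
  proof
    fix k assume k: "k \<in> {k. M i k \<noteq> fa_zero \<and> N k j \<noteq> fa_zero}"
    show "k \<in> Blk m"
    proof (rule ccontr)
      assume "k \<notin> Blk m"
      then have "snd k \<ge> n" using assms by (auto simp: Blk_def)
      then have "M i k = mat_id i k" using assms(1) unfolding bnd_def by blast
      then have "k = i" using k by auto
      then show False using \<open>k \<notin> Blk m\<close> assms by (auto simp: Blk_def)
    qed
  qed
  show ?thesis unfolding mat_mult_def fs_def
  proof (rule ext, rule sum.mono_neutral_left[OF finite_Blk sub])
    fix w
    show "\<forall>k\<in>Blk m - {k. M i k \<noteq> fa_zero \<and> N k j \<noteq> fa_zero}. fa_mult (M i k) (N k j) w = 0"
      by (auto simp: fa_zero_def fa_mult_def)
  qed
qed

lemma mat_mult_row_id: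
  assumes "\<And>k. M i k = mat_id i k"
  shows "mat_mult M N i j = N i j"
proof (cases "N i j = fa_zero")
  case True
  then have e: "{k. M i k \<noteq> fa_zero \<and> N k j \<noteq> fa_zero} = {}" using assms by auto
  show ?thesis unfolding mat_mult_def e using True by (simp add: fa_zero_def)
next
  case False
  then have "{k. M i k \<noteq> fa_zero \<and> N k j \<noteq> fa_zero} = {i}" using assms by auto
  then show ?thesis using assms by (auto simp: mat_mult_def mat_id_def)
qed

lemma mat_mult_col_id:
  assumes "\<And>k. N k j = mat_id k j"
  shows "mat_mult M N i j = M i j"
proof (cases "M i j = fa_zero")
  case True
  then have e: "{k. M i k \<noteq> fa_zero \<and> N k j \<noteq> fa_zero} = {}" using assms by (auto simp: mat_id_def)
  show ?thesis unfolding mat_mult_def e using True by (simp add: fa_zero_def)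
next
  case False
  then have "{k. M i k \<noteq> fa_zero \<and> N k j \<noteq> fa_zero} = {j}" using assms by (auto simp: mat_id_def)
  then show ?thesis using assms by (auto simp: mat_mult_def mat_id_def)
qed

lemma mat_mult_id_left[simp]: "mat_mult mat_id N = N"
  by (intro ext mat_mult_row_id) simp
lemma mat_mult_id_right[simp]: "mat_mult M mat_id = M"
  by (intro ext mat_mult_col_id) simp

lemma bnd_mult: "bnd M n \<Longrightarrow> bnd N n \<Longrightarrow> bnd (mat_mult M N) n"
  unfolding bnd_def
proof (intro allI impI)
  fix i j :: idx
  assume M: "\<forall>i j. n \<le> snd i \<or> n \<le> snd j \<longrightarrow> M i j = mat_id i j"
    and N: "\<forall>i j. n \<le> snd i \<or> n \<le> snd j \<longrightarrow> N i j = mat_id i j"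
    and ij: "n \<le> snd i \<or> n \<le> snd j"
  show "mat_mult M N i j = mat_id i j"
  proof (cases "n \<le> snd i")
    case True
    then have "mat_mult M N i j = N i j" using M by (intro mat_mult_row_id) blast
    then show ?thesis using N True by auto
  next
    case False
    then have "n \<le> snd j" using ij by auto
    then have "mat_mult M N i j = M i j" using N by (intro mat_mult_col_id) blast
    then show ?thesis using M \<open>n \<le> snd j\<close> by auto
  qed
qed

lemma fin_mat_mult: "finitary M \<Longrightarrow> finitary N \<Longrightarrow> fa_fin (mat_mult M N i j)"
proof -
  assume M: "finitary M" and N: "finitary N"
  obtain n where n: "bnd M n" "bnd N n" using finitary_common[OF M N] by blast
  let ?m = "max n (Suc (snd i))"
  have eq: "mat_mult M N i j = fs (Blk ?m) (\<lambda>k. fa_mult (M i k) (N k j))"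
    using n by (intro mat_mult_blk) auto
  have fM: "\<And>a b. fa_fin (M a b)" using M unfolding finitary_def by blast
  have fN: "\<And>a b. fa_fin (N a b)" using N unfolding finitary_def by blast
  show ?thesis unfolding eq by (intro fin_fs fin_mult finite_Blk fM fN)
qed

lemma finitary_mult: "finitary M \<Longrightarrow> finitary N \<Longrightarrow> finitary (mat_mult M N)"
  using fin_mat_mult finitary_common bnd_mult unfolding finitary_iff by metis

lemma finitary_id[simp]: "finitary mat_id"
  unfolding finitary_iff bnd_def by auto

lemma mat_mult_assoc:
  assumes M: "finitary M" and N: "finitary N" and P: "finitary P"
  shows "mat_mult (mat_mult M N) P = mat_mult M (mat_mult N P)"
proof (intro ext)
  fix i j :: idx and w :: "gen list"
  obtain n1 where n1: "bnd M n1" "bnd N n1" using finitary_common[OF M N] by blast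
  obtain n2 where n2: "bnd N n2" "bnd P n2" using finitary_common[OF N P] by blast
  let ?m = "max (max n1 n2) (Suc (snd i))"
  have bM: "bnd M ?m" "bnd N ?m" "bnd P ?m" using n1 n2 bnd_mono by (meson max.cobounded1 max.cobounded2 order_trans)+
  have MN: "bnd (mat_mult M N) ?m" using bM bnd_mult by blast
  have L: "mat_mult (mat_mult M N) P i j = fs (Blk ?m) (\<lambda>k. fa_mult (mat_mult M N i k) (P k j))"
    using MN by (intro mat_mult_blk) auto
  have L2: "\<And>k. mat_mult M N i k = fs (Blk ?m) (\<lambda>l. fa_mult (M i l) (N l k))"
    using bM by (intro mat_mult_blk) auto
  have R: "mat_mult M (mat_mult N P) i j = fs (Blk ?m) (\<lambda>l. fa_mult (M i l) (mat_mult N P l j))"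
    using bM by (intro mat_mult_blk) auto
  have R2: "\<And>l. l \<in> Blk ?m \<Longrightarrow> mat_mult N P l j = fs (Blk ?m) (\<lambda>k. fa_mult (N l k) (P k j))"
    using bM by (intro mat_mult_blk) (auto simp: Blk_def)
  have "mat_mult (mat_mult M N) P i j w = (\<Sum>k\<in>Blk ?m. \<Sum>l\<in>Blk ?m. fa_mult (fa_mult (M i l) (N l k)) (P k j) w)"
    unfolding L L2 by (simp only: fa_mult_fs_left[OF finite_Blk]) (simp add: fs_def)
  also have "\<dots> = (\<Sum>l\<in>Blk ?m. \<Sum>k\<in>Blk ?m. fa_mult (M i l) (fa_mult (N l k) (P k j)) w)"
    by (subst sum.swap) (simp add: fa_mult_assoc)
  also have "\<dots> = (\<Sum>l\<in>Blk ?m. fa_mult (M i l) (fs (Blk ?m) (\<lambda>k. fa_mult (N l k) (P k j))) w)"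
    by (simp only: fa_mult_fs_right[OF finite_Blk]) (simp add: fs_def)
  also have "\<dots> = (\<Sum>l\<in>Blk ?m. fa_mult (M i l) (mat_mult N P l j) w)"
    using R2 by (intro sum.cong) auto
  also have "\<dots> = mat_mult M (mat_mult N P) i j w"
    unfolding R fs_def by simp
  finally show "mat_mult (mat_mult M N) P i j w = mat_mult M (mat_mult N P) i j w" .
qed

lemma finitary_fin: "finitary M \<Longrightarrow> fa_fin (M i j)" unfolding finitary_def by blast
lemma mpod_eqD: "mat_pod_eq q M N \<Longrightarrow> pod_eq q (M i j) (N i j)" unfolding mat_pod_eq_def by blast

lemma mpod_refl[simp]: "mat_pod_eq q M M" by (simp add: mat_pod_eq_def)
lemma mpod_sym: "mat_pod_eq q M N \<Longrightarrow> mat_pod_eq q N M" by (simp add: mat_pod_eq_def pod_sym)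
lemma mpod_trans: "mat_pod_eq q M N \<Longrightarrow> mat_pod_eq q N P \<Longrightarrow> mat_pod_eq q M P"
  unfolding mat_pod_eq_def by (meson pod_trans)

lemma mpod_mult:
  assumes M: "finitary M" "finitary M'" and N: "finitary N" "finitary N'"
    and "mat_pod_eq q M M'" "mat_pod_eq q N N'"
  shows "mat_pod_eq q (mat_mult M N) (mat_mult M' N')"
  unfolding mat_pod_eq_def
proof (intro allI)
  fix i j :: idx
  obtain n1 where n1: "bnd M n1" "bnd N n1" using finitary_common[OF M(1) N(1)] by blast
  obtain n2 where n2: "bnd M' n2" "bnd N' n2" using finitary_common[OF M(2) N(2)] by blast
  let ?m = "max (max n1 n2) (Suc (snd i))"
  have "mat_mult M N i j = fs (Blk ?m) (\<lambda>k. fa_mult (M i k) (N k j))"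
    using n1 by (intro mat_mult_blk) auto
  moreover have "mat_mult M' N' i j = fs (Blk ?m) (\<lambda>k. fa_mult (M' i k) (N' k j))"
    using n2 by (intro mat_mult_blk) auto
  moreover have "pod_eq q (fs (Blk ?m) (\<lambda>k. fa_mult (M i k) (N k j))) (fs (Blk ?m) (\<lambda>k. fa_mult (M' i k) (N' k j)))"
    using assms by (intro pod_fs pod_mult finite_Blk) (blast intro: finitary_fin mpod_eqD)+
  ultimately show "pod_eq q (mat_mult M N i j) (mat_mult M' N' i j)" by simp
qed



definition sig :: "gen list \<Rightarrow> gen list" where "sig v = rev (map gen_swap v)"

lemma swap_swap[simp]: "gen_swap (gen_swap x) = x" by (cases x) auto
lemma sig_sig[simp]: "sig (sig v) = v" by (simp add: sig_def rev_map comp_def)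
lemma length_sig[simp]: "length (sig v) = length v" by (simp add: sig_def)
lemma sig_Nil[simp]: "sig v = [] \<longleftrightarrow> v = []" by (simp add: sig_def)

lemma wc_append: "word_coef q (u @ v) = word_coef q u * word_coef q v"
  by (simp add: word_coef_def)

lemma wc_sig: "q \<noteq> 0 \<Longrightarrow> word_coef q v * word_coef q (sig v) = 1"
proof (induction v)
  case Nil then show ?case by (simp add: word_coef_def sig_def)
next
  case (Cons x v)
  have s: "sig (x # v) = sig v @ [gen_swap x]" by (simp add: sig_def)
  have x: "(- q) powi gen_idx x * (- q) powi gen_idx (gen_swap x) = 1"
    using Cons.prems by (cases x) (auto simp: power_int_minus field_simps)
  have "word_coef q (x # v) * word_coef q (sig (x # v)) =
        ((- q) powi gen_idx x * (- q) powi gen_idx (gen_swap x)) * (word_coef q v * word_coef q (sig v))"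
    unfolding s wc_append by (simp add: word_coef_def mult_ac)
  then show ?case using x Cons by simp
qed

lemma star_apply: "fa_star q f v = cnj (f (sig v)) * of_real (word_coef q (sig v))"
  by (simp add: fa_star_def sig_def Let_def)

lemma star_star: "q \<noteq> 0 \<Longrightarrow> fa_star q (fa_star q f) = f"
proof
  fix v assume q: "q \<noteq> 0"
  have "fa_star q (fa_star q f) v = f v * of_real (word_coef q v * word_coef q (sig v))"
    by (simp add: star_apply mult_ac)
  then show "fa_star q (fa_star q f) v = f v" using wc_sig[OF q] by simp
qed

lemma star_zero[simp]: "fa_star q fa_zero = fa_zero"
  by (simp add: fa_star_def fa_zero_def)

lemma star_one[simp]: "fa_star q fa_one = fa_one"
  by (auto simp: star_apply fa_one_def fa_word_def word_coef_def sig_def)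

lemma star_fs: "fa_star q (fs K F) = fs K (\<lambda>k. fa_star q (F k))"
  by (rule ext) (simp add: star_apply fs_def sum_distrib_right)

lemma star_smult1[simp]: "fa_smult 1 f = f" by (simp add: fa_smult_def)

lemma fin_star: "fa_fin f \<Longrightarrow> fa_fin (fa_star q f)"
  unfolding fa_fin_def
proof -
  assume f: "finite {w. f w \<noteq> 0}"
  have "{v. fa_star q f v \<noteq> 0} \<subseteq> sig ` {w. f w \<noteq> 0}"
  proof
    fix v assume "v \<in> {v. fa_star q f v \<noteq> 0}"
    then have "f (sig v) \<noteq> 0" by (auto simp: star_apply)
    then show "v \<in> sig ` {w. f w \<noteq> 0}" by (metis (mono_tags) image_eqI mem_Collect_eq sig_sig)
  qed
  then show "finite {v. fa_star q f v \<noteq> 0}" using f by (meson finite_imageI finite_subset)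
qed

lemma sig_take: "sig (take i v) = drop (length v - i) (sig v)"
  unfolding sig_def take_map[symmetric] rev_take by simp
lemma sig_drop: "sig (drop i v) = take (length v - i) (sig v)"
  unfolding sig_def drop_map[symmetric] rev_drop by simp

lemma star_mult: "fa_star q (fa_mult f g) = fa_mult (fa_star q g) (fa_star q f)"
proof
  fix v
  let ?n = "length v" and ?w = "sig v"
  define G where "G = (\<lambda>k. cnj (f (take k ?w) * g (drop k ?w)) * of_real (word_coef q ?w))"
  have "fa_mult (fa_star q g) (fa_star q f) v = (\<Sum>i\<in>{0..?n}. G (?n - i))"
  proof -
    have "fa_mult (fa_star q g) (fa_star q f) v = (\<Sum>i\<in>{..?n}. fa_star q g (take i v) * fa_star q f (drop i v))"
      by (simp add: fa_mult_def)
    also have "\<dots> = (\<Sum>i\<in>{0..?n}. G (?n - i))"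
    proof (rule sum.cong)
      fix i assume "i \<in> {0..?n}"
      have wc: "word_coef q ?w = word_coef q (take (?n - i) ?w) * word_coef q (drop (?n - i) ?w)"
        by (metis append_take_drop_id wc_append)
      show "fa_star q g (take i v) * fa_star q f (drop i v) = G (?n - i)"
        unfolding star_apply sig_take sig_drop G_def wc by (simp add: mult_ac)
    qed auto
    finally show ?thesis .
  qed
  also have "\<dots> = (\<Sum>i\<in>{0..?n}. G i)"
    using sum.atLeastAtMost_rev[of "\<lambda>i. G (?n - i)" 0 ?n] by simp
  also have "\<dots> = fa_star q (fa_mult f g) v"
    by (simp add: star_apply fa_mult_def G_def sum_distrib_right atLeast0AtMost)
  finally show "fa_star q (fa_mult f g) v = fa_mult (fa_star q g) (fa_star q f) v" by simp
qed

abbreviation ms :: "real \<Rightarrow> Defs.mat \<Rightarrow> Defs.mat" where "ms q M \<equiv> mat_star q 1 M"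

lemma ms_apply: "ms q M (b,i) (c,j) = fa_star q (M (\<not> c, j) (\<not> b, i))"
  by (simp add: mat_star_def)

lemma ms_apply': "ms q M x y = fa_star q (M (\<not> fst y, snd y) (\<not> fst x, snd x))"
  by (cases x; cases y) (simp add: ms_apply)

lemma ms_id[simp]: "ms q mat_id = mat_id"
  by (auto intro!: ext simp: ms_apply' mat_id_def prod_eq_iff)

lemma bnd_ms: "bnd M n \<Longrightarrow> bnd (ms q M) n"
  unfolding bnd_def
proof (intro allI impI)
  fix x y :: idx
  assume M: "\<forall>i j. n \<le> snd i \<or> n \<le> snd j \<longrightarrow> M i j = mat_id i j" and xy: "n \<le> snd x \<or> n \<le> snd y"
  have "M (\<not> fst y, snd y) (\<not> fst x, snd x) = mat_id (\<not> fst y, snd y) (\<not> fst x, snd x)"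
    using M xy by (metis snd_conv)
  then show "ms q M x y = mat_id x y"
    by (auto simp: ms_apply' mat_id_def prod_eq_iff)
qed

lemma finitary_ms: "finitary M \<Longrightarrow> finitary (ms q M)"
  unfolding finitary_iff using bnd_ms fin_star by (metis ms_apply')

lemma ms_ms: "q \<noteq> 0 \<Longrightarrow> ms q (ms q M) = M"
  by (intro ext) (simp add: ms_apply' star_star)

lemma ms_mult:
  assumes M: "finitary M" and N: "finitary N"
  shows "ms q (mat_mult M N) = mat_mult (ms q N) (ms q M)"
proof (intro ext)
  fix x y :: idx and w :: "gen list"
  obtain b i where x: "x = (b,i)" by (cases x)
  obtain c j where y: "y = (c,j)" by (cases y)
  obtain n where n: "bnd M n" "bnd N n" using finitary_common[OF M N] by blast
  let ?m = "max n (Suc (max i j))"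
  have bM: "bnd M ?m" "bnd N ?m" using n bnd_mono by (meson max.cobounded1)+
  define h where "h = (\<lambda>k. fa_mult (fa_star q (N k (\<not> b, i))) (fa_star q (M (\<not> c, j) k)))"
  have "ms q (mat_mult M N) x y = fa_star q (mat_mult M N (\<not> c, j) (\<not> b, i))"
    by (simp add: x y ms_apply)
  also have "\<dots> = fa_star q (fs (Blk ?m) (\<lambda>k. fa_mult (M (\<not> c, j) k) (N k (\<not> b, i))))"
    using bM by (subst mat_mult_blk[where n = ?m and m = ?m]) auto
  also have "\<dots> = fs (Blk ?m) h"
    by (simp add: star_fs star_mult h_def)
  finally have L: "ms q (mat_mult M N) x y = fs (Blk ?m) h" .
  have "mat_mult (ms q N) (ms q M) x y = fs (Blk ?m) (\<lambda>k. fa_mult (ms q N x k) (ms q M k y))"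
    using bM bnd_ms by (intro mat_mult_blk[where n = ?m]) (auto simp: x)
  also have "\<dots> = fs (Blk ?m) (\<lambda>k. h (\<not> fst k, snd k))"
    by (simp add: x y ms_apply' h_def)
  also have "\<dots> = fs (Blk ?m) h"
    unfolding fs_def
    by (intro ext sum.reindex_bij_witness[where i = "\<lambda>k. (\<not> fst k, snd k)" and j = "\<lambda>k. (\<not> fst k, snd k)"])
       (auto simp: Blk_def)
  finally show "ms q (mat_mult M N) x y w = mat_mult (ms q N) (ms q M) x y w" using L by simp
qed



lemma cls_mem: "finitary M \<Longrightarrow> M \<in> mat_cls q M"
  by (simp add: mat_cls_def)

lemma cls_eq: "finitary M \<Longrightarrow> finitary N \<Longrightarrow> mat_pod_eq q M N \<Longrightarrow> mat_cls q M = mat_cls q N"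
  unfolding mat_cls_def by (blast intro: mpod_trans mpod_sym)

lemma cls_some: "finitary M \<Longrightarrow> finitary (SOME Y0. Y0 \<in> mat_cls q M) \<and> mat_pod_eq q (SOME Y0. Y0 \<in> mat_cls q M) M"
proof -
  assume "finitary M"
  then have "M \<in> mat_cls q M" by (rule cls_mem)
  then have "(SOME Y0. Y0 \<in> mat_cls q M) \<in> mat_cls q M" by (rule someI[of "\<lambda>Y. Y \<in> mat_cls q M"])
  then show ?thesis by (simp add: mat_cls_def)
qed

lemma U_carrier: "carrier (U_group q eps) = mat_cls q ` U_reps q eps"
  by (simp add: U_group_def)
lemma U_one: "one (U_group q eps) = mat_cls q mat_id"
  by (simp add: U_group_def)

lemma U_mult_cls:
  assumes M: "finitary M" and N: "finitary N"
  shows "monoid.mult (U_group q eps) (mat_cls q M) (mat_cls q N) = mat_cls q (mat_mult M N)"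
proof -
  let ?M = "SOME Y0. Y0 \<in> mat_cls q M" and ?N = "SOME Y0. Y0 \<in> mat_cls q N"
  have a: "finitary ?M" "mat_pod_eq q ?M M" using cls_some[OF M] by auto
  have b: "finitary ?N" "mat_pod_eq q ?N N" using cls_some[OF N] by auto
  have "mat_cls q (mat_mult ?M ?N) = mat_cls q (mat_mult M N)"
    using a b M N by (intro cls_eq finitary_mult mpod_mult) auto
  then show ?thesis by (simp add: U_group_def)
qed

lemma U_reps_finitary: "M \<in> U_reps q eps \<Longrightarrow> finitary M"
  by (simp add: U_reps_def)

lemma id_U_reps: "mat_id \<in> U_reps q 1"
  by (simp add: U_reps_def)

lemma ms_U_reps: "q \<noteq> 0 \<Longrightarrow> M \<in> U_reps q 1 \<Longrightarrow> ms q M \<in> U_reps q 1"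
  unfolding U_reps_def by (auto simp: ms_ms finitary_ms)

lemma mult_U_reps:
  assumes M: "M \<in> U_reps q 1" and N: "N \<in> U_reps q 1"
  shows "mat_mult M N \<in> U_reps q 1"
proof -
  have fM: "finitary M" "finitary (ms q M)" using M by (auto simp: U_reps_def finitary_ms)
  have fN: "finitary N" "finitary (ms q N)" using N by (auto simp: U_reps_def finitary_ms)
  have M1: "mat_pod_eq q (mat_mult (ms q M) M) mat_id" "mat_pod_eq q (mat_mult M (ms q M)) mat_id"
    using M by (auto simp: U_reps_def)
  have N1: "mat_pod_eq q (mat_mult (ms q N) N) mat_id" "mat_pod_eq q (mat_mult N (ms q N)) mat_id"
    using N by (auto simp: U_reps_def)
  note fin = fM fN finitary_mult finitary_id
  have e1: "mat_mult (ms q (mat_mult M N)) (mat_mult M N) = mat_mult (ms q N) (mat_mult (mat_mult (ms q M) M) N)"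
    using fM fN by (simp add: ms_mult mat_mult_assoc finitary_mult)
  have p1: "mat_pod_eq q (mat_mult (ms q N) (mat_mult (mat_mult (ms q M) M) N)) (mat_mult (ms q N) (mat_mult mat_id N))"
    using M1 fin by (intro mpod_mult mpod_refl) (auto intro: finitary_mult)
  have 1: "mat_pod_eq q (mat_mult (ms q (mat_mult M N)) (mat_mult M N)) (mat_mult (ms q N) N)"
    using e1 p1 by simp
  have e2: "mat_mult (mat_mult M N) (ms q (mat_mult M N)) = mat_mult M (mat_mult (mat_mult N (ms q N)) (ms q M))"
    using fM fN by (simp add: ms_mult mat_mult_assoc finitary_mult)
  have p2: "mat_pod_eq q (mat_mult M (mat_mult (mat_mult N (ms q N)) (ms q M))) (mat_mult M (mat_mult mat_id (ms q M)))"
    using N1 fin by (intro mpod_mult mpod_refl) (auto intro: finitary_mult)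
  have 2: "mat_pod_eq q (mat_mult (mat_mult M N) (ms q (mat_mult M N))) (mat_mult M (ms q M))"
    using e2 p2 by simp
  show ?thesis unfolding U_reps_def
    using fM fN finitary_mult 1 2 M1 N1 by (blast intro: mpod_trans)
qed

lemma U_group_group:
  assumes q: "q \<noteq> 0"
  shows "Group.group (U_group q 1)"
proof (rule groupI)
  fix x y
  assume x: "x \<in> carrier (U_group q 1)" and y: "y \<in> carrier (U_group q 1)"
  then obtain M N where MN: "M \<in> U_reps q 1" "N \<in> U_reps q 1" "x = mat_cls q M" "y = mat_cls q N"
    by (auto simp: U_carrier)
  then show "x \<otimes>\<^bsub>U_group q 1\<^esub> y \<in> carrier (U_group q 1)"
    by (simp add: U_mult_cls U_reps_finitary U_carrier mult_U_reps)
next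
  show "\<one>\<^bsub>U_group q 1\<^esub> \<in> carrier (U_group q 1)"
    by (simp add: U_one U_carrier id_U_reps)
next
  fix x y z
  assume "x \<in> carrier (U_group q 1)" "y \<in> carrier (U_group q 1)" "z \<in> carrier (U_group q 1)"
  then obtain M N P where MN: "M \<in> U_reps q 1" "N \<in> U_reps q 1" "P \<in> U_reps q 1"
     "x = mat_cls q M" "y = mat_cls q N" "z = mat_cls q P"
    by (auto simp: U_carrier)
  then have f: "finitary M" "finitary N" "finitary P" by (auto simp: U_reps_finitary)
  then show "x \<otimes>\<^bsub>U_group q 1\<^esub> y \<otimes>\<^bsub>U_group q 1\<^esub> z = x \<otimes>\<^bsub>U_group q 1\<^esub> (y \<otimes>\<^bsub>U_group q 1\<^esub> z)"
    using MN by (simp add: U_mult_cls finitary_mult mat_mult_assoc)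
next
  fix x
  assume "x \<in> carrier (U_group q 1)"
  then obtain M where M: "M \<in> U_reps q 1" "x = mat_cls q M" by (auto simp: U_carrier)
  then show "\<one>\<^bsub>U_group q 1\<^esub> \<otimes>\<^bsub>U_group q 1\<^esub> x = x"
    by (simp add: U_one U_mult_cls U_reps_finitary)
next
  fix x
  assume "x \<in> carrier (U_group q 1)"
  then obtain M where M: "M \<in> U_reps q 1" "x = mat_cls q M" by (auto simp: U_carrier)
  have fM: "finitary M" "finitary (ms q M)" using M by (auto simp: U_reps_finitary finitary_ms)
  have "mat_cls q (ms q M) \<in> carrier (U_group q 1)" using ms_U_reps[OF q M(1)] by (simp add: U_carrier)
  moreover have "mat_cls q (ms q M) \<otimes>\<^bsub>U_group q 1\<^esub> x = \<one>\<^bsub>U_group q 1\<^esub>"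
    using M fM by (simp add: U_mult_cls U_one) (intro cls_eq finitary_mult finitary_id, auto simp: U_reps_def)
  ultimately show "\<exists>y\<in>carrier (U_group q 1). y \<otimes>\<^bsub>U_group q 1\<^esub> x = \<one>\<^bsub>U_group q 1\<^esub>" by blast
qed



definition dec :: "nat \<Rightarrow> idx" where "dec r = (odd r, r div 2)"
definition enc :: "idx \<Rightarrow> nat" where "enc k = 2 * snd k + (if fst k then 1 else 0)"

lemma enc_dec[simp]: "enc (dec r) = r" by (simp add: enc_def dec_def)
lemma dec_enc[simp]: "dec (enc k) = k" by (cases k) (auto simp: enc_def dec_def)
lemma dec_inj: "dec r = dec c \<longleftrightarrow> r = c" by (metis enc_dec)
lemma snd_dec: "snd (dec r) = r div 2" by (simp add: dec_def)
lemma enc_less: "snd k < n \<Longrightarrow> enc k < 2 * n" by (simp add: enc_def)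

definition XM :: "real \<Rightarrow> nat \<Rightarrow> Defs.mat \<Rightarrow> complex Matrix.mat" where
  "XM q n M = mat (2 * n) (2 * n) (\<lambda>(r,c). chi q (M (dec r) (dec c)))"

lemma XM_carrier: "XM q n M \<in> carrier_mat (2*n) (2*n)" by (simp add: XM_def)

lemma XM_Suc:
  assumes "bnd M n" "n \<le> m"
  shows "XM q (Suc m) M = four_block_mat (XM q m M) (0\<^sub>m (2*m) 2) (0\<^sub>m 2 (2*m)) (1\<^sub>m 2)"
proof (rule eq_matI)
  have b: "bnd M m" using assms bnd_mono by blast
  fix r c assume r: "r < dim_row (four_block_mat (XM q m M) (0\<^sub>m (2*m) 2) (0\<^sub>m 2 (2*m)) (1\<^sub>m 2))"
    and c: "c < dim_col (four_block_mat (XM q m M) (0\<^sub>m (2*m) 2) (0\<^sub>m 2 (2*m)) (1\<^sub>m 2))"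
  have r': "r < 2 * m + 2" and c': "c < 2 * m + 2" using r c by (auto simp: XM_def)
  have out: "M (dec r) (dec c) = mat_id (dec r) (dec c)" if "\<not> (r < 2*m \<and> c < 2*m)"
  proof -
    have "snd (dec r) \<ge> m \<or> snd (dec c) \<ge> m" using that by (auto simp: snd_dec)
    then show ?thesis using b unfolding bnd_def by blast
  qed
  show "XM q (Suc m) M $$ (r, c) = four_block_mat (XM q m M) (0\<^sub>m (2*m) 2) (0\<^sub>m 2 (2*m)) (1\<^sub>m 2) $$ (r, c)"
  proof (cases "r < 2*m \<and> c < 2*m")
    case True
    then show ?thesis using r' c' by (simp add: XM_def)
  next
    case False
    have "chi q (M (dec r) (dec c)) = (if r = c then 1 else 0)"
      using out[OF False] by (simp add: mat_id_def dec_inj)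
    then show ?thesis using r' c' False by (auto simp: XM_def)
  qed
qed (auto simp: XM_def)

lemma det_XM_stable:
  assumes "bnd M n" "n \<le> m"
  shows "det (XM q m M) = det (XM q n M)"
  using assms(2)
proof (induction m rule: dec_induct)
  case base then show ?case by simp
next
  case (step m)
  have "det (XM q (Suc m) M) = det (XM q m M) * det (1\<^sub>m 2 :: complex Matrix.mat)"
    unfolding XM_Suc[OF assms(1) step(1)]
    by (rule det_four_block_mat_upper_right_zero[OF XM_carrier]) auto
  then show ?case using step by simp
qed

definition phi :: "real \<Rightarrow> Defs.mat \<Rightarrow> complex" where
  "phi q M = det (XM q (LEAST n. bnd M n) M)"

lemma phi_eq: assumes "bnd M n" shows "phi q M = det (XM q n M)"
proof -
  have l: "bnd M (LEAST n. bnd M n)" using assms by (rule LeastI)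
  have "(LEAST n. bnd M n) \<le> n" using assms by (rule Least_le)
  then show ?thesis unfolding phi_def by (rule det_XM_stable[OF l, symmetric])
qed

lemma XM_mult:
  assumes M: "finitary M" and N: "finitary N" and n: "bnd M n" "bnd N n"
  shows "XM q n (mat_mult M N) = XM q n M * XM q n N"
proof (rule eq_matI)
  fix r c assume r: "r < dim_row (XM q n M * XM q n N)" and c: "c < dim_col (XM q n M * XM q n N)"
  have r': "r < 2*n" and c': "c < 2*n" using r c by (auto simp: XM_def)
  have fM: "\<And>a b. fa_fin (M a b)" and fN: "\<And>a b. fa_fin (N a b)" using M N finitary_fin by blast+
  have "mat_mult M N (dec r) (dec c) = fs (Blk n) (\<lambda>k. fa_mult (M (dec r) k) (N k (dec c)))"
    using n r' by (intro mat_mult_blk) (auto simp: snd_dec)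
  then have "chi q (mat_mult M N (dec r) (dec c)) = (\<Sum>k\<in>Blk n. chi q (M (dec r) k) * chi q (N k (dec c)))"
    by (simp add: chi_fs chi_mult fM fN)
  also have "\<dots> = (\<Sum>t\<in>{0..<2*n}. chi q (M (dec r) (dec t)) * chi q (N (dec t) (dec c)))"
    by (rule sum.reindex_bij_witness[where i = dec and j = enc]) (auto simp: Blk_def snd_dec enc_less)
  finally show "XM q n (mat_mult M N) $$ (r, c) = (XM q n M * XM q n N) $$ (r, c)"
    using r' c' by (simp add: XM_def scalar_prod_def)
qed (auto simp: XM_def)

lemma phi_mult:
  assumes M: "finitary M" and N: "finitary N"
  shows "phi q (mat_mult M N) = phi q M * phi q N"
proof -
  obtain n where n: "bnd M n" "bnd N n" using finitary_common[OF M N] by blast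
  have "phi q (mat_mult M N) = det (XM q n (mat_mult M N))" using bnd_mult[OF n] by (rule phi_eq)
  also have "\<dots> = det (XM q n M) * det (XM q n N)"
    unfolding XM_mult[OF M N n] by (rule det_mult[OF XM_carrier XM_carrier])
  finally show ?thesis using phi_eq n by simp
qed

lemma phi_pod:
  assumes q: "0 < q" and M: "finitary M" and N: "finitary N" and e: "mat_pod_eq q M N"
  shows "phi q M = phi q N"
proof -
  obtain n where n: "bnd M n" "bnd N n" using finitary_common[OF M N] by blast
  have "XM q n M = XM q n N"
    unfolding XM_def using chi_pod[OF q] finitary_fin[OF M] finitary_fin[OF N] mpod_eqD[OF e]
    by (intro eq_matI) auto
  then show ?thesis using phi_eq n by simp
qed

lemma phi_id: "phi q mat_id = 1"
proof -
  have "bnd mat_id 0" by (simp add: bnd_def)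
  then have "phi q mat_id = det (XM q 0 mat_id)" by (rule phi_eq)
  also have "XM q 0 mat_id = 1\<^sub>m 0" by (auto simp: XM_def)
  finally show ?thesis by simp
qed



definition dg :: "(idx \<Rightarrow> complex) \<Rightarrow> Defs.mat" where
  "dg a = (\<lambda>i j. if i = j then fa_smult (a i) fa_one else fa_zero)"

lemma diag_mult:
  assumes "\<And>k. k \<noteq> i \<Longrightarrow> D i k = fa_zero"
  shows "mat_mult D E i j = fa_mult (D i i) (E i j)"
proof (rule ext)
  fix w
  have sub: "{k. D i k \<noteq> fa_zero \<and> E k j \<noteq> fa_zero} \<subseteq> {i}" using assms by auto
  have "mat_mult D E i j w = (\<Sum>k\<in>{i}. fa_mult (D i k) (E k j) w)"
    unfolding mat_mult_def
    by (rule sum.mono_neutral_left[OF _ sub]) (auto simp: fa_zero_def fa_mult_def)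
  then show "mat_mult D E i j w = fa_mult (D i i) (E i j) w" by simp
qed

lemma dg_mult: "mat_mult (dg a) (dg b) = dg (\<lambda>i. a i * b i)"
proof (intro ext)
  fix i j :: idx and w
  have "mat_mult (dg a) (dg b) i j = fa_mult (dg a i i) (dg b i j)"
    by (rule diag_mult) (simp add: dg_def)
  also have "\<dots> = dg (\<lambda>i. a i * b i) i j"
  proof (cases "i = j")
    case True
    have "fa_mult (fa_smult (a i) fa_one) (fa_smult (b i) fa_one) = fa_smult (a i * b i) fa_one"
      unfolding fa_mult_smult_left fa_mult_smult_right fa_mult_one_left by (simp add: fa_smult_def mult_ac)
    then show ?thesis using True by (simp add: dg_def)
  qed (simp add: dg_def)
  finally show "mat_mult (dg a) (dg b) i j w = dg (\<lambda>i. a i * b i) i j w" by simp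
qed

lemma dg_one: "(\<And>i. a i = 1) \<Longrightarrow> dg a = mat_id"
  by (auto intro!: ext simp: dg_def mat_id_def)

lemma star_smult_one: "fa_star q (fa_smult c fa_one) = fa_smult (cnj c) fa_one"
  by (auto intro!: ext simp: star_apply fa_smult_def fa_one_def fa_word_def word_coef_def sig_def)

lemma ms_dg: "(\<And>i. a (\<not> fst i, snd i) = a i) \<Longrightarrow> ms q (dg a) = dg (\<lambda>i. cnj (a i))"
  by (auto intro!: ext simp: ms_apply' dg_def star_smult_one prod_eq_iff)

definition uW :: "idx \<Rightarrow> complex" where "uW i = (if snd i = 0 then \<i> else 1)"

lemma bnd_W: "bnd (dg uW) 1"
  by (auto simp: bnd_def dg_def uW_def mat_id_def)

lemma finitary_W: "finitary (dg uW)"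
  unfolding finitary_iff using bnd_W by (auto simp: dg_def)

lemma W_U_reps: "dg uW \<in> U_reps q 1"
proof -
  have ms: "ms q (dg uW) = dg (\<lambda>i. cnj (uW i))" by (rule ms_dg) (simp add: uW_def)
  have u: "\<And>i. cnj (uW i) * uW i = 1" "\<And>i. uW i * cnj (uW i) = 1" by (auto simp: uW_def)
  show ?thesis unfolding U_reps_def
    using finitary_W by (simp add: ms dg_mult u dg_one)
qed

lemma phi_W: "phi q (dg uW) = -1"
proof -
  have "phi q (dg uW) = det (XM q 1 (dg uW))" using bnd_W by (rule phi_eq)
  also have "\<dots> = prod_list (diag_mat (XM q 1 (dg uW)))"
    by (rule det_upper_triangular[OF _ XM_carrier]) (auto simp: upper_triangular_def XM_def dg_def dec_inj)
  also have "\<dots> = -1"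
    by (simp add: diag_mat_def XM_def dg_def uW_def dec_def chi_smult upt_rec)
  finally show ?thesis .
qed



theorem theorem6p3:
  fixes q :: real
  assumes "0 < q" and "q < 1"
  shows "KU1_nontrivial q 1"
proof -
  have q: "0 < q" by fact
  let ?G = "U_group q 1"
  interpret G: group ?G using U_group_group q by simp
  define Phi where "Phi S = phi q (SOME Y. Y \<in> S)" for S
  have Phi_cls: "Phi (mat_cls q M) = phi q M" if "finitary M" for M
    using cls_some[OF that, of q] phi_pod[OF q] that unfolding Phi_def by blast
  have car: "x \<in> carrier ?G \<Longrightarrow> \<exists>M. M \<in> U_reps q 1 \<and> x = mat_cls q M" for x
    by (auto simp: U_carrier)
  have Phi_mult: "Phi (x \<otimes>\<^bsub>?G\<^esub> y) = Phi x * Phi y" if xy: "x \<in> carrier ?G" "y \<in> carrier ?G" for x y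
  proof -
    obtain M where "M \<in> U_reps q 1" "x = mat_cls q M" using car[OF xy(1)] by blast
    moreover obtain N where "N \<in> U_reps q 1" "y = mat_cls q N" using car[OF xy(2)] by blast
    ultimately show ?thesis
      by (simp add: U_mult_cls U_reps_finitary Phi_cls finitary_mult phi_mult)
  qed
  have Phi_one: "Phi \<one>\<^bsub>?G\<^esub> = 1" by (simp add: U_one Phi_cls phi_id)
  have Phi_inv: "Phi (inv\<^bsub>?G\<^esub> x) * Phi x = 1" if "x \<in> carrier ?G" for x
    using Phi_mult[of "inv\<^bsub>?G\<^esub> x" x] that Phi_one by simp
  define K where "K = {x \<in> carrier ?G. Phi x = 1}"
  have subK: "subgroup K ?G"
  proof (rule G.subgroupI)
    show "K \<subseteq> carrier ?G" by (auto simp: K_def)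
    show "K \<noteq> {}" using Phi_one by (auto simp: K_def)
    show "inv\<^bsub>?G\<^esub> a \<in> K" if "a \<in> K" for a
      using that Phi_inv[of a] by (auto simp: K_def)
    show "a \<otimes>\<^bsub>?G\<^esub> b \<in> K" if "a \<in> K" "b \<in> K" for a b
      using that Phi_mult[of a b] by (auto simp: K_def)
  qed
  have "derived_set ?G (carrier ?G) \<subseteq> K"
  proof
    fix h assume "h \<in> derived_set ?G (carrier ?G)"
    then obtain h1 h2 where h: "h1 \<in> carrier ?G" "h2 \<in> carrier ?G"
      "h = h1 \<otimes>\<^bsub>?G\<^esub> h2 \<otimes>\<^bsub>?G\<^esub> inv\<^bsub>?G\<^esub> h1 \<otimes>\<^bsub>?G\<^esub> inv\<^bsub>?G\<^esub> h2" by blast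
    have "Phi h = (Phi (inv\<^bsub>?G\<^esub> h1) * Phi h1) * (Phi (inv\<^bsub>?G\<^esub> h2) * Phi h2)"
      using h by (simp add: Phi_mult mult_ac)
    then have "Phi h = 1" using Phi_inv h by simp
    then show "h \<in> K" using h by (simp add: K_def)
  qed
  then have der: "derived ?G (carrier ?G) \<subseteq> K"
    unfolding derived_def by (rule G.generate_subgroup_incl[OF _ subK])
  have W: "mat_cls q (dg uW) \<in> carrier ?G" using W_U_reps by (simp add: U_carrier)
  have "Phi (mat_cls q (dg uW)) = -1" using finitary_W by (simp add: Phi_cls phi_W)
  then have "mat_cls q (dg uW) \<notin> K" by (simp add: K_def)
  then show ?thesis unfolding KU1_nontrivial_def using der W by blast
qed


end
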